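(* For all integers $m \geq 3$ and $n \geq 1$, $s_{n,m}(112,122)=2^{n-1}$.
   Context: For positive integers $n,m$, $[n]_m$ denotes the regular multiset $\{1^m,2^m,\ldots,n^m\}$ (each element of $[n]=\{1,\dots,n\}$ occurs exactly $m$ times), and a permutation of $[n]_m$ is a sequence of length $nm$ in which each $i\in[n]$ appears exactly $m$ times. A sequence $\sigma=\sigma_1\cdots\sigma_L$ of integers contains a pattern $\pi=\pi_1\cdots\pi_k$ (a sequence of positive integers, possibly with repeated letters) if there are indices $i_1<\dots<i_k$ such that for all $a,b$: $\sigma_{i_a}<\sigma_{i_b}\iff \pi_a<\pi_b$ and $\sigma_{i_a}=\sigma_{i_b}\iff\pi_a=\pi_b$ (i.e. the subsequence is order-isomorphic to $\pi$); otherwise $\sigma$ avoids $\pi$. For a set of patterns $\Pi$, $s_{n,m}(\Pi)$ is the number of permutations of $[n]_m$ avoiding every pattern in $\Pi$. *)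

theory Defs
  imports Main
begin

definition multiset_perms :: "nat \<Rightarrow> nat \<Rightarrow> nat list set" where
  "multiset_perms n m =
     {w. set w \<subseteq> {1..n} \<and> (\<forall>i\<in>{1..n}. count_list w i = m)}"

definition contains_pattern :: "nat list \<Rightarrow> nat list \<Rightarrow> bool" where
  "contains_pattern \<sigma> \<pi> \<longleftrightarrow>
     (\<exists>idx :: nat \<Rightarrow> nat.
        (\<forall>a b. a < b \<and> b < length \<pi> \<longrightarrow> idx a < idx b) \<and>
        (\<forall>a < length \<pi>. idx a < length \<sigma>) \<and>
        (\<forall>a < length \<pi>. \<forall>b < length \<pi>.
            (\<sigma> ! idx a < \<sigma> ! idx b \<longleftrightarrow> \<pi> ! a < \<pi> ! b) \<and>
            (\<sigma> ! idx a = \<sigma> ! idx b \<longleftrightarrow> \<pi> ! a = \<pi> ! b)))"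

definition avoids :: "nat list \<Rightarrow> nat list \<Rightarrow> bool" where
  "avoids \<sigma> \<pi> \<longleftrightarrow> \<not> contains_pattern \<sigma> \<pi>"

definition s_count :: "nat \<Rightarrow> nat \<Rightarrow> nat list set \<Rightarrow> nat" where
  "s_count n m \<Pi> = card {\<sigma> \<in> multiset_perms n m. \<forall>\<pi>\<in>\<Pi>. avoids \<sigma> \<pi>}"

end

theory Submission
  imports Defs "HOL-Library.Sublist"
begin

lemma subseq_Cons_nth:
  "subseq (x#xs) ys \<longleftrightarrow> (\<exists>j<length ys. ys!j = x \<and> subseq xs (drop (Suc j) ys))"
proof
  assume "subseq (x#xs) ys"
  then obtain us v vs where "ys = us @ v # vs" "x = v" "subseq xs vs"
    using list_emb_ConsD by fastforce
  then show "\<exists>j<length ys. ys!j = x \<and> subseq xs (drop (Suc j) ys)"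
    by (intro exI[of _ "length us"]) auto
next
  assume "\<exists>j<length ys. ys!j = x \<and> subseq xs (drop (Suc j) ys)"
  then obtain j where j: "j < length ys" "ys!j = x" "subseq xs (drop (Suc j) ys)" by blast
  have "ys = take j ys @ ys!j # drop (Suc j) ys" using j(1) by (simp add: id_take_nth_drop)
  moreover have "subseq (x#xs) (take j ys @ x # drop (Suc j) ys)"
    using j(3) by (intro list_emb_append2) auto
  ultimately show "subseq (x#xs) ys" using j(2) by simp
qed

lemma subseq3:
  "subseq [a,b,c] w \<longleftrightarrow> (\<exists>i j k. i<j \<and> j<k \<and> k<length w \<and> w!i=a \<and> w!j=b \<and> w!k=c)"
proof
  assume "subseq [a,b,c] w"
  then obtain i where i: "i<length w" "w!i=a" "subseq [b,c] (drop (Suc i) w)"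
    using subseq_Cons_nth by metis
  then obtain j where j: "j<length (drop (Suc i) w)" "drop (Suc i) w!j=b" "subseq [c] (drop (Suc j) (drop (Suc i) w))"
    using subseq_Cons_nth by metis
  then obtain k where k: "k<length (drop (Suc j) (drop (Suc i) w))" "drop (Suc j) (drop (Suc i) w)!k=c"
    using subseq_Cons_nth by metis
  show "\<exists>i j k. i<j \<and> j<k \<and> k<length w \<and> w!i=a \<and> w!j=b \<and> w!k=c"
    apply (rule exI[of _ i], rule exI[of _ "Suc i + j"], rule exI[of _ "Suc (Suc i + j) + k"])
    using i j k by (auto simp: algebra_simps)
next
  assume "\<exists>i j k. i<j \<and> j<k \<and> k<length w \<and> w!i=a \<and> w!j=b \<and> w!k=c"
  then obtain i j k where h: "i<j" "j<k" "k<length w" "w!i=a" "w!j=b" "w!k=c" by blast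
  have "subseq [c] (drop (Suc (j - Suc i)) (drop (Suc i) w))"
    unfolding subseq_Cons_nth
    apply (rule exI[of _ "k - Suc j"]) using h by auto
  then have "subseq [b,c] (drop (Suc i) w)"
    unfolding subseq_Cons_nth[of b]
    apply - apply (rule exI[of _ "j - Suc i"]) using h by auto
  then show "subseq [a,b,c] w"
    unfolding subseq_Cons_nth[of a]
    apply - apply (rule exI[of _ i]) using h by auto
qed

lemma three_cases: "(a::nat) < 3 \<longleftrightarrow> a = 0 \<or> a = 1 \<or> a = 2" by auto

lemma cp112: "contains_pattern w [1,1,2] \<longleftrightarrow> (\<exists>a b. a < b \<and> subseq [a,a,b] w)"
proof
  assume "contains_pattern w [1,1,2]"
  then obtain idx where h: "\<forall>a b. a < b \<and> b < length [1,1,2::nat] \<longrightarrow> idx a < idx b"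
     "\<forall>a < length [1,1,2::nat]. idx a < length w"
     "\<forall>a < length [1,1,2::nat]. \<forall>b < length [1,1,2::nat]. (w ! idx a < w ! idx b \<longleftrightarrow> [1,1,2::nat] ! a < [1,1,2] ! b) \<and>
            (w ! idx a = w ! idx b \<longleftrightarrow> [1,1,2::nat] ! a = [1,1,2] ! b)"
    unfolding contains_pattern_def by blast
  have "w!idx 0 = w!idx 1" "w!idx 0 < w!idx 2" using h(3)[rule_format, of 0 1] h(3)[rule_format, of 0 2] by auto
  moreover have "idx 0 < idx 1" "idx 1 < idx 2" "idx 2 < length w" using h(1,2) by auto
  ultimately show "\<exists>a b. a < b \<and> subseq [a,a,b] w" unfolding subseq3 by metis
next
  assume "\<exists>a b. a < b \<and> subseq [a,a,b] w"
  then obtain i j k where h: "i<j" "j<k" "k<length w" "w!i=w!j" "w!i<w!k" unfolding subseq3 by auto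
  show "contains_pattern w [1,1,2]" unfolding contains_pattern_def
    apply (rule exI[of _ "\<lambda>a. if a = 0 then i else if a = 1 then j else k"])
    using h by (auto simp: three_cases)
qed

lemma cp122: "contains_pattern w [1,2,2] \<longleftrightarrow> (\<exists>a b. a < b \<and> subseq [a,b,b] w)"
proof
  assume "contains_pattern w [1,2,2]"
  then obtain idx where h: "\<forall>a b. a < b \<and> b < length [1,2,2::nat] \<longrightarrow> idx a < idx b"
     "\<forall>a < length [1,2,2::nat]. idx a < length w"
     "\<forall>a < length [1,2,2::nat]. \<forall>b < length [1,2,2::nat]. (w ! idx a < w ! idx b \<longleftrightarrow> [1,2,2::nat] ! a < [1,2,2] ! b) \<and>
            (w ! idx a = w ! idx b \<longleftrightarrow> [1,2,2::nat] ! a = [1,2,2] ! b)"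
    unfolding contains_pattern_def by blast
  have "w!idx 1 = w!idx 2" "w!idx 0 < w!idx 1" using h(3)[rule_format, of 1 2] h(3)[rule_format, of 0 1] by auto
  moreover have "idx 0 < idx 1" "idx 1 < idx 2" "idx 2 < length w" using h(1,2) by auto
  ultimately show "\<exists>a b. a < b \<and> subseq [a,b,b] w" unfolding subseq3 by metis
next
  assume "\<exists>a b. a < b \<and> subseq [a,b,b] w"
  then obtain i j k where h: "i<j" "j<k" "k<length w" "w!j=w!k" "w!i<w!j" unfolding subseq3 by auto
  show "contains_pattern w [1,2,2]" unfolding contains_pattern_def
    apply (rule exI[of _ "\<lambda>a. if a = 0 then i else if a = 1 then j else k"])
    using h by (auto simp: three_cases)
qed


definition bad :: "nat list \<Rightarrow> bool" where
  "bad w \<longleftrightarrow> (\<exists>a b. a < b \<and> (subseq [a,a,b] w \<or> subseq [a,b,b] w))"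

definition G :: "nat \<Rightarrow> nat \<Rightarrow> nat list set" where
  "G n m = {w \<in> multiset_perms n m. \<not> bad w}"

lemma avoid_iff: "(\<forall>\<pi>\<in>{[1,1,2],[1,2,2]}. avoids \<sigma> \<pi>) \<longleftrightarrow> \<not> bad \<sigma>"
  unfolding avoids_def bad_def Ball_def insert_iff empty_iff using cp112[of \<sigma>] cp122[of \<sigma>] by blast

lemma subseq_set: "subseq (x#xs) ys \<Longrightarrow> x \<in> set ys"
  using subseq_Cons_nth by (metis nth_mem)

lemma bad_mono: "subseq v w \<Longrightarrow> bad v \<Longrightarrow> bad w"
  unfolding bad_def by (meson subseq_order.dual_order.trans)

lemma bad_Cons_big:
  assumes "\<forall>x\<in>set w. x \<le> N" "bad (N#w)" shows "bad w"
proof -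
  obtain a b where ab: "a < b" "subseq [a,a,b] (N#w) \<or> subseq [a,b,b] (N#w)"
    using assms(2) unfolding bad_def by blast
  have "a \<noteq> N"
  proof
    assume "a = N"
    from ab(2) have "b \<in> set (N#w)"
      by (metis subseq_Cons' subseq_set)
    then show False using ab(1) assms(1) \<open>a = N\<close> by auto
  qed
  then have "subseq [a,a,b] w \<or> subseq [a,b,b] w" using ab(2) by auto
  then show ?thesis using ab(1) unfolding bad_def by blast
qed

lemma bad_rep:
  assumes "\<forall>x\<in>set w. x \<le> N" "bad (replicate k N @ w)" shows "bad w"
  using assms(2)
proof (induction k)
  case 0 then show ?case by simp
next
  case (Suc k)
  have "\<forall>x\<in>set (replicate k N @ w). x \<le> N" using assms(1) by auto
  then show ?case using bad_Cons_big[of "replicate k N @ w" N] Suc by simp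
qed

lemma bad_ins:
  assumes "\<forall>x\<in>set (h#t). x < N" "bad (h#N#t)" shows "bad (h#t)"
proof -
  obtain a b where ab: "a < b" "subseq [a,a,b] (h#N#t) \<or> subseq [a,b,b] (h#N#t)"
    using assms(2) unfolding bad_def by blast
  have "b \<in> set (h#N#t)" using ab(2) by (metis subseq_Cons' subseq_set)
  then have bN: "b \<le> N" using assms(1) by auto
  have "subseq [a,a,b] (h#t) \<or> subseq [a,b,b] (h#t)"
  proof (cases "a = h")
    case True
    have hN: "h \<noteq> N" using assms(1) by auto
    show ?thesis
    proof (cases "b = N")
      case bN': True
      have Nt: "N \<notin> set t" using assms(1) by auto
      from ab(2) True bN' hN have "subseq [h,N] (N#t) \<or> subseq [N,N] (N#t)" by auto
      then have "subseq [h,N] t \<or> subseq [N] t" using hN by auto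
      then have "subseq [h,N] t" using Nt by (auto simp: subseq_singleton_left)
      then show ?thesis using True bN' by auto
    next
      case False
      with ab(2) True hN show ?thesis by auto
    qed
  next
    case False
    then have "a \<noteq> N" using ab(1) bN by auto
    with False ab(2) show ?thesis by auto
  qed
  then show ?thesis using ab(1) unfolding bad_def by blast
qed

lemma count2: "2 \<le> count_list t y \<Longrightarrow> subseq [y,y] t"
proof (induction t)
  case Nil then show ?case by simp
next
  case (Cons z t)
  show ?case
  proof (cases "z = y")
    case True
    then have "y \<in> set t" using Cons.prems by (metis count_notin count_list.simps(2) le_add2 numeral_le_one_iff semiring_norm(69) add_0 not_less_eq_eq one_add_one)
    then show ?thesis using True by (simp add: subseq_singleton_left)
  next
    case False then show ?thesis using Cons by auto
  qed
qed

lemma count_rep: "count_list (replicate k x) y = (if x = y then k else 0)"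
  by (induction k) auto

lemma struct_lemma:
  assumes "w \<in> G n m" "n \<ge> 1" shows "\<exists>r. w = replicate (m-1) n @ r"
proof -
  define k where "k = length (takeWhile (\<lambda>x. x = n) w)"
  define r where "r = dropWhile (\<lambda>x. x = n) w"
  have tw: "takeWhile (\<lambda>x. x = n) w = replicate k n"
    unfolding k_def by (intro replicate_length_same[symmetric]) (auto dest: set_takeWhileD)
  have w: "w = replicate k n @ r"
    unfolding r_def using tw takeWhile_dropWhile_id by metis
  have mp: "set w \<subseteq> {1..n}" "\<forall>i\<in>{1..n}. count_list w i = m" "\<not> bad w"
    using assms unfolding G_def multiset_perms_def by auto
  show ?thesis
  proof (cases "m - 1 \<le> k")
    case True
    then have "w = replicate (m-1) n @ (replicate (k - (m-1)) n @ r)"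
      using w True by (simp add: replicate_add[symmetric])
    then show ?thesis by blast
  next
    case False
    have cn: "count_list w n = m" using mp(2) assms(2) by auto
    then have cr: "count_list r n = m - k" using w by (simp add: count_rep)
    then have "r \<noteq> []" using False by auto
    then obtain x t where r: "r = x # t" by (cases r) auto
    have "x \<noteq> n" using hd_dropWhile[of "\<lambda>x. x = n" w] r unfolding r_def by auto
    moreover have "x \<in> set w" using w r by auto
    ultimately have xn: "x < n" using mp(1) by fastforce
    have "count_list t n \<ge> 2" using cr r \<open>x \<noteq> n\<close> False by auto
    then have "subseq [n,n] t" by (rule count2)
    then have "subseq [x,n,n] w" using w r by auto
    then have "bad w" unfolding bad_def using xn by blast
    then show ?thesis using mp(3) by blast
  qed
qed

definition f1 :: "nat \<Rightarrow> nat \<Rightarrow> nat list \<Rightarrow> nat list" where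
  "f1 n m v = replicate m (Suc n) @ v"
definition f2 :: "nat \<Rightarrow> nat \<Rightarrow> nat list \<Rightarrow> nat list" where
  "f2 n m v = replicate (m-1) (Suc n) @ hd v # Suc n # tl v"

lemma G_nonempty: "v \<in> G n m \<Longrightarrow> n \<ge> 1 \<Longrightarrow> m \<ge> 1 \<Longrightarrow> v \<noteq> []"
  unfolding G_def multiset_perms_def by force

lemma G_sup1: assumes "v \<in> G n m" shows "f1 n m v \<in> G (Suc n) m"
proof -
  have mp: "set v \<subseteq> {1..n}" "\<forall>i\<in>{1..n}. count_list v i = m" "\<not> bad v"
    using assms unfolding G_def multiset_perms_def by auto
  have "\<forall>x\<in>set v. x \<le> Suc n" using mp(1) by auto
  then have "\<not> bad (f1 n m v)" unfolding f1_def using bad_rep[of v "Suc n" m] mp by auto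
  moreover have "set (f1 n m v) \<subseteq> {1..Suc n}" unfolding f1_def using mp(1) by auto
  moreover have "\<forall>i\<in>{1..Suc n}. count_list (f1 n m v) i = m"
  proof
    fix i assume i: "i \<in> {1..Suc n}"
    show "count_list (f1 n m v) i = m"
    proof (cases "i = Suc n")
      case True
      then have "i \<notin> set v" using mp(1) by auto
      then show ?thesis using True unfolding f1_def by (simp add: count_rep)
    next
      case False
      then show ?thesis using i mp(2) unfolding f1_def by (simp add: count_rep)
    qed
  qed
  ultimately show ?thesis unfolding G_def multiset_perms_def by auto
qed

lemma G_sup2: assumes "v \<in> G n m" "n \<ge> 1" "m \<ge> 1" shows "f2 n m v \<in> G (Suc n) m"
proof -
  have mp: "set v \<subseteq> {1..n}" "\<forall>i\<in>{1..n}. count_list v i = m" "\<not> bad v"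
    using assms unfolding G_def multiset_perms_def by auto
  obtain h t where v: "v = h # t" using G_nonempty[OF assms] by (cases v) auto
  have f: "f2 n m v = replicate (m-1) (Suc n) @ h # Suc n # t" unfolding f2_def v by simp
  have lt: "\<forall>x\<in>set (h#t). x < Suc n" using mp(1) v by auto
  have "\<not> bad (h # Suc n # t)" using bad_ins[OF lt] mp v by auto
  moreover have "\<forall>x\<in>set (h # Suc n # t). x \<le> Suc n" using lt by auto
  ultimately have "\<not> bad (f2 n m v)" unfolding f using bad_rep[of "h # Suc n # t" "Suc n" "m-1"] by auto
  moreover have "set (f2 n m v) \<subseteq> {1..Suc n}" unfolding f using mp(1) v by auto
  moreover have "\<forall>i\<in>{1..Suc n}. count_list (f2 n m v) i = m"
  proof
    fix i assume i: "i \<in> {1..Suc n}"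
    show "count_list (f2 n m v) i = m"
    proof (cases "i = Suc n")
      case True
      then have "i \<notin> set v" using mp(1) by auto
      then show ?thesis using True assms(3) unfolding f by (simp add: count_rep v)
    next
      case False
      then have "i \<in> {1..n}" using i by auto
      then have "count_list (h#t) i = m" using mp(2) v by auto
      then show ?thesis using False unfolding f by (simp add: count_rep split: if_splits)
    qed
  qed
  ultimately show ?thesis unfolding G_def multiset_perms_def by auto
qed

lemma G_sub: assumes "w \<in> G (Suc n) m" "n \<ge> 1" "m \<ge> 3"
  shows "w \<in> f1 n m ` G n m \<union> f2 n m ` G n m"
proof -
  let ?N = "Suc n"
  have mp: "set w \<subseteq> {1..?N}" "\<forall>i\<in>{1..?N}. count_list w i = m" "\<not> bad w"
    using assms unfolding G_def multiset_perms_def by auto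
  obtain r where w: "w = replicate (m-1) ?N @ r" using struct_lemma[OF assms(1)] by auto
  have "count_list w ?N = m" using mp(2) by auto
  then have "count_list r ?N = Suc 0" using w assms(3) by (simp add: count_rep)
  then obtain p q where pq: "r = p @ ?N # q" "?N \<notin> set p" "count_list q ?N = 0"
    using count_list_Suc_split_first by metis
  have qN: "?N \<notin> set q" using pq(3) by (simp add: count_list_0_iff)
  define v where "v = p @ q"
  have wv: "w = replicate (m-1) ?N @ p @ ?N # q" using w pq by simp
  have "subseq (p@q) (p @ ?N # q)" by (auto simp: subseq_append' intro: list_emb.intros)
  then have sv: "subseq v w" unfolding v_def wv
    using list_emb_append2[of "(=)" "p@q" "p @ ?N # q" "replicate (m-1) ?N"] by simp
  have vG: "v \<in> G n m"
  proof -
    have "set v \<subseteq> {1..n}" using mp(1) pq(2) qN unfolding wv v_def by (fastforce simp: subset_iff le_Suc_eq)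
    moreover have "\<forall>i\<in>{1..n}. count_list v i = m"
    proof
      fix i assume i: "i \<in> {1..n}"
      then have "count_list w i = m" using mp(2) by auto
      then show "count_list v i = m" using i unfolding wv v_def by (simp add: count_rep)
    qed
    moreover have "\<not> bad v" using mp(3) sv bad_mono by blast
    ultimately show ?thesis unfolding G_def multiset_perms_def by auto
  qed
  show ?thesis
  proof (cases p)
    case Nil
    then have "w = f1 n m q" unfolding wv f1_def using assms(3)
      by (metis Suc_diff_1 append.left_neutral append_Cons le_trans not_one_le_zero not_gr_zero numeral_le_one_iff replicate_Suc replicate_app_Cons_same semiring_norm(70) one_le_numeral)
    then show ?thesis using vG Nil unfolding v_def by auto
  next
    case (Cons x t)
    obtain r' where "v = replicate (m-1) n @ r'" using struct_lemma[OF vG assms(2)] by auto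
    moreover have "m - 1 = Suc (Suc (m - 3))" using assms(3) by auto
    ultimately have vn: "v = n # n # replicate (m-3) n @ r'" by simp
    then have xn: "x = n" using Cons unfolding v_def by simp
    show ?thesis
    proof (cases t)
      case Nil
      then have "w = f2 n m v" unfolding wv f2_def v_def using Cons by simp
      then show ?thesis using vG by auto
    next
      case (Cons y t')
      have "y = n" using vn \<open>p = x # t\<close> Cons qN unfolding v_def
        by simp
      then have "subseq [n,n,?N] (p @ ?N # q)" using \<open>p = x # t\<close> Cons xn
        by (simp add: subseq_singleton_left)
      then have "subseq [n,n,?N] w" unfolding wv
        using list_emb_append2[of "(=)" "[n,n,?N]" "p @ ?N # q" "replicate (m-1) ?N"] by simp
      then have "bad w" unfolding bad_def by blast
      then show ?thesis using mp(3) by blast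
    qed
  qed
qed

lemma G_finite: "finite (G n m)"
proof (rule finite_subset)
  show "G n m \<subseteq> {xs. set xs \<subseteq> {1..n} \<and> length xs = n*m}"
  proof
    fix w assume "w \<in> G n m"
    then have mp: "set w \<subseteq> {1..n}" "\<forall>i\<in>{1..n}. count_list w i = m"
      unfolding G_def multiset_perms_def by auto
    have "length w = sum (count_list w) {1..n}" using sum_count_set[OF mp(1)] by simp
    also have "\<dots> = sum (\<lambda>_. m) {1..n}" using mp(2) by (intro sum.cong) auto
    also have "\<dots> = n*m" by simp
    finally show "w \<in> {xs. set xs \<subseteq> {1..n} \<and> length xs = n*m}" using mp(1) by simp
  qed
  show "finite {xs. set xs \<subseteq> {1..n} \<and> length xs = n*m}"
    by (rule finite_lists_length_eq) simp
qed

lemma card_step: assumes "n \<ge> 1" "m \<ge> 3"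
  shows "card (G (Suc n) m) = 2 * card (G n m)"
proof -
  have eq: "G (Suc n) m = f1 n m ` G n m \<union> f2 n m ` G n m"
    using G_sub[OF _ assms] G_sup1 G_sup2[of _ n m] assms by auto
  have i1: "inj_on (f1 n m) (G n m)" unfolding inj_on_def f1_def by simp
  have i2: "inj_on (f2 n m) (G n m)"
  proof (rule inj_onI)
    fix u u' assume u: "u \<in> G n m" "u' \<in> G n m" "f2 n m u = f2 n m u'"
    then have "hd u = hd u' \<and> tl u = tl u'" unfolding f2_def by simp
    moreover have "u \<noteq> []" "u' \<noteq> []" using G_nonempty u assms by auto
    ultimately show "u = u'" by (metis list.collapse)
  qed
  have disj: "f1 n m ` G n m \<inter> f2 n m ` G n m = {}"
  proof (rule ccontr)
    assume "f1 n m ` G n m \<inter> f2 n m ` G n m \<noteq> {}"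
    then obtain v u where vu: "v \<in> G n m" "u \<in> G n m" "f1 n m v = f2 n m u" by blast
    have "m = Suc (m - 1)" using assms by auto
    then have "replicate m (Suc n) = replicate (m-1) (Suc n) @ [Suc n]"
      by (metis replicate_Suc replicate_append_same)
    then have "hd u = Suc n" using vu(3) unfolding f1_def f2_def by simp
    moreover have "u \<noteq> []" using G_nonempty vu assms by auto
    moreover have "set u \<subseteq> {1..n}" using vu(2) unfolding G_def multiset_perms_def by auto
    ultimately show False by (metis atLeastAtMost_iff hd_in_set lessI not_le subsetD)
  qed
  have "card (G (Suc n) m) = card (f1 n m ` G n m) + card (f2 n m ` G n m)"
    unfolding eq using disj G_finite by (intro card_Un_disjoint) auto
  also have "\<dots> = 2 * card (G n m)" using card_image[OF i1] card_image[OF i2] by simp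
  finally show ?thesis .
qed

lemma G_one: assumes "m \<ge> 1" shows "G 1 m = {replicate m 1}"
proof
  show "G 1 m \<subseteq> {replicate m 1}"
  proof
    fix w assume "w \<in> G 1 m"
    then have mp: "set w \<subseteq> {1}" "count_list w 1 = m" unfolding G_def multiset_perms_def by auto
    then have "w = replicate (length w) 1" by (metis replicate_length_same singletonD subsetD)
    moreover then have "length w = m" using mp(2) by (metis count_rep)
    ultimately show "w \<in> {replicate m 1}" by simp
  qed
  have "\<not> bad (replicate m 1)"
  proof
    assume "bad (replicate m 1)"
    then obtain a b where ab: "a < b" "subseq [a,a,b] (replicate m (1::nat)) \<or> subseq [a,b,b] (replicate m 1)"
      unfolding bad_def by blast
    then have "a \<in> set (replicate m (1::nat))" "b \<in> set (replicate m (1::nat))"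
      by (metis subseq_set subseq_Cons')+
    then show False using ab(1) by simp
  qed
  then show "{replicate m 1} \<subseteq> G 1 m" unfolding G_def multiset_perms_def using assms by (auto simp: count_rep)
qed

lemma card_G: assumes "m \<ge> 3" shows "card (G (Suc k) m) = 2 ^ k"
proof (induction k)
  case 0 then show ?case using G_one assms by simp
next
  case (Suc k) then show ?case using card_step[of "Suc k" m] assms by simp
qed

theorem theorem1:
  fixes n m :: nat
  assumes "m \<ge> 3" and "n \<ge> 1"
  shows "s_count n m {[1,1,2], [1,2,2]} = 2 ^ (n - 1)"
proof -
  have "s_count n m {[1,1,2], [1,2,2]} = card (G n m)"
    unfolding s_count_def G_def using avoid_iff by presburger
  moreover have "n = Suc (n - 1)" using assms by simp
  ultimately show ?thesis using card_G[OF assms(1), of "n-1"] by simp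
qed
end
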